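(* Let $n\ge 2$, let $M_1,\ldots,M_k\in\mathrm{H}(n,\mathbb{Q}(\mathrm{i}))$ be such that $M_1M_2\cdots M_k\in\Omega$, and let $\ell\ge1$ be an integer. Write $\psi(M_i)=(\boldsymbol{a}_i,\boldsymbol{b}_i,c_i)$ for $i=1,\ldots,k$. Then \[(M_1^\ell M_2^\ell\cdots M_k^\ell)_{1,n}=\ell\sum_{i=1}^k\Big(c_i-\tfrac12\boldsymbol{a}_i^T\boldsymbol{b}_i\Big)+\frac{\ell^2}{2}\sum_{1\le i<j\le k-1}[M_i,M_j].\]
   Context: $\mathbb{Q}(\mathrm{i})=\{a+b\mathrm{i}\mid a,b\in\mathbb{Q}\}$. $\mathrm{H}(n,\mathbb{Q}(\mathrm{i}))$ is the set of $n\times n$ matrices $M=\begin{pmatrix}1&\boldsymbol{m}_1^T&m_3\\ \boldsymbol{0}&\boldsymbol{I}_{n-2}&\boldsymbol{m}_2\\ 0&\boldsymbol{0}^T&1\end{pmatrix}$ with $\boldsymbol{m}_1,\boldsymbol{m}_2\in\mathbb{Q}(\mathrm{i})^{n-2}$, $m_3\in\mathbb{Q}(\mathrm{i})$, and $\psi(M)=(\boldsymbol{m}_1,\boldsymbol{m}_2,m_3)$. $\Omega$ is the set of such matrices with $\boldsymbol{m}_1=\boldsymbol{m}_2=\boldsymbol{0}$. $X_{1,n}$ is the top-right entry of $X$. For $M_i,M_j$ with $\psi(M_i)=(\boldsymbol{a}_i,\boldsymbol{b}_i,c_i)$, $\psi(M_j)=(\boldsymbol{a}_j,\boldsymbol{b}_j,c_j)$,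 the commutator is the scalar $[M_i,M_j]=\boldsymbol{a}_i^T\boldsymbol{b}_j-\boldsymbol{a}_j^T\boldsymbol{b}_i\in\mathbb{Q}(\mathrm{i})$ (transpose without conjugation). *)

theory Defs
  imports Complex_Main "Jordan_Normal_Form.Matrix"
begin

definition QI :: "complex set" where
  "QI = {z. Re z \<in> \<rat> \<and> Im z \<in> \<rat>}"

text \<open>H(n,Q(i)), with 0-based indices 0..n-1: unit diagonal, entries in Q(i),
  nonzero off-diagonal entries only in the first row (index 0) or last column (index n-1).\<close>
definition heis :: "nat \<Rightarrow> complex mat set" where
  "heis n = {M. M \<in> carrier_mat n n \<and>
     (\<forall>i<n. \<forall>j<n. M $$ (i,j) \<in> QI) \<and>
     (\<forall>i<n. M $$ (i,i) = 1) \<and>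
     (\<forall>i<n. \<forall>j<n. i \<noteq> j \<and> i \<noteq> 0 \<and> j \<noteq> n - 1 \<longrightarrow> M $$ (i,j) = 0)}"

definition Omega :: "nat \<Rightarrow> complex mat set" where
  "Omega n = {M \<in> heis n. \<forall>t. 0 < t \<and> t < n - 1 \<longrightarrow> M $$ (0,t) = 0 \<and> M $$ (t,n-1) = 0}"

text \<open>psi(M) = (m1, m2, m3): m1 = first row entries 1..n-2, m2 = last column entries 1..n-2,
  m3 = top-right entry.  dotab n A B = a_A^T b_B (no conjugation).\<close>
definition dotab :: "nat \<Rightarrow> complex mat \<Rightarrow> complex mat \<Rightarrow> complex" where
  "dotab n A B = (\<Sum>t\<in>{1..<n-1}. A $$ (0,t) * B $$ (t,n-1))"

definition psi_c :: "nat \<Rightarrow> complex mat \<Rightarrow> complex" where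
  "psi_c n A = A $$ (0, n-1)"

definition hcomm :: "nat \<Rightarrow> complex mat \<Rightarrow> complex mat \<Rightarrow> complex" where
  "hcomm n A B = dotab n A B - dotab n B A"

definition mprod :: "nat \<Rightarrow> nat \<Rightarrow> (nat \<Rightarrow> complex mat) \<Rightarrow> complex mat" where
  "mprod n k M = foldr (\<lambda>i acc. M i * acc) [1..<k+1] (1\<^sub>m n)"

end

theory Submission
  imports Defs
begin


definition hm :: "nat \<Rightarrow> (nat \<Rightarrow> complex) \<Rightarrow> (nat \<Rightarrow> complex) \<Rightarrow> complex \<Rightarrow> complex mat" where
  "hm n a b c = mat n n (\<lambda>(i,j). if i = j then 1 else if i = 0 \<and> j = n-1 then c
      else if i = 0 then a j else if j = n-1 then b i else 0)"

definition dt :: "nat \<Rightarrow> (nat \<Rightarrow> complex) \<Rightarrow> (nat \<Rightarrow> complex) \<Rightarrow> complex" where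
  "dt n a b = (\<Sum>t\<in>{1..<n-1}. a t * b t)"

lemma hm_carrier[simp]: "hm n a b c \<in> carrier_mat n n" by (simp add: hm_def)

lemma dim_hm[simp]: "dim_row (hm n a b c) = n" "dim_col (hm n a b c) = n" by (simp_all add: hm_def)

lemma hm_idx: "i < n \<Longrightarrow> j < n \<Longrightarrow> hm n a b c $$ (i,j) = (if i = j then 1 else if i = 0 \<and> j = n-1 then c
      else if i = 0 then a j else if j = n-1 then b i else 0)"
  by (simp add: hm_def)

lemma heis_hm: assumes "n \<ge> 2" "M \<in> heis n"
  shows "M = hm n (\<lambda>j. M $$ (0,j)) (\<lambda>i. M $$ (i,n-1)) (M $$ (0,n-1))"
proof -
  have Mc: "M \<in> carrier_mat n n" using assms(2) unfolding heis_def by blast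
  show ?thesis
proof (rule eq_matI)
  show "dim_row M = dim_row (hm n (\<lambda>j. M $$ (0,j)) (\<lambda>i. M $$ (i,n-1)) (M $$ (0,n-1)))"
    using Mc by simp
  show "dim_col M = dim_col (hm n (\<lambda>j. M $$ (0,j)) (\<lambda>i. M $$ (i,n-1)) (M $$ (0,n-1)))"
    using Mc by simp
  fix i j assume "i < dim_row (hm n (\<lambda>j. M $$ (0,j)) (\<lambda>i. M $$ (i,n-1)) (M $$ (0,n-1)))"
    "j < dim_col (hm n (\<lambda>j. M $$ (0,j)) (\<lambda>i. M $$ (i,n-1)) (M $$ (0,n-1)))"
  then have ij: "i < n" "j < n" by (auto simp: hm_def)
  show "M $$ (i,j) = hm n (\<lambda>j. M $$ (0,j)) (\<lambda>i. M $$ (i,n-1)) (M $$ (0,n-1)) $$ (i,j)"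
  proof -
    from assms(2) have d: "\<forall>i<n. M $$ (i,i) = 1"
      and z: "\<forall>i<n. \<forall>j<n. i \<noteq> j \<and> i \<noteq> 0 \<and> j \<noteq> n - 1 \<longrightarrow> M $$ (i,j) = 0"
      unfolding heis_def by blast+
    show ?thesis using ij d z by (simp add: hm_idx)
  qed
qed
qed

lemma hm_one: "hm n (\<lambda>_. 0) (\<lambda>_. 0) 0 = 1\<^sub>m n"
  by (rule eq_matI) (auto simp: hm_def)

lemma sum_split3:
  fixes n :: nat
  assumes "n \<ge> 2"
  shows "(\<Sum>r<n. f r) = f 0 + f (n-1) + (\<Sum>r\<in>{1..<n-1}. f r)"
proof -
  have "{..<n} = insert 0 (insert (n-1) {1..<n-1})" using assms by auto
  then show ?thesis using assms by (simp add: add.assoc)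
qed

lemma hm_mult: assumes "n \<ge> 2"
  shows "hm n a b c * hm n a' b' c' = hm n (\<lambda>j. a j + a' j) (\<lambda>i. b i + b' i) (c + c' + dt n a b')"
proof (rule eq_matI)
  fix i j assume "i < dim_row (hm n (\<lambda>j. a j + a' j) (\<lambda>i. b i + b' i) (c + c' + dt n a b'))"
    "j < dim_col (hm n (\<lambda>j. a j + a' j) (\<lambda>i. b i + b' i) (c + c' + dt n a b'))"
  then have ij: "i < n" "j < n" by (auto simp: hm_def)
  have e: "(hm n a b c * hm n a' b' c') $$ (i,j) = (\<Sum>r<n. hm n a b c $$ (i,r) * hm n a' b' c' $$ (r,j))"
    using ij by (simp add: scalar_prod_def lessThan_atLeast0)
  also have "\<dots> = hm n a b c $$ (i,0) * hm n a' b' c' $$ (0,j) + hm n a b c $$ (i,n-1) * hm n a' b' c' $$ (n-1,j)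
     + (\<Sum>r\<in>{1..<n-1}. hm n a b c $$ (i,r) * hm n a' b' c' $$ (r,j))"
    by (rule sum_split3[OF assms])
  also have "(\<Sum>r\<in>{1..<n-1}. hm n a b c $$ (i,r) * hm n a' b' c' $$ (r,j))
     = (\<Sum>r\<in>{1..<n-1}. (if i = r then 1 else if i = 0 then a r else 0) * (if r = j then 1 else if j = n-1 then b' r else 0))"
    using ij by (intro sum.cong) (auto simp: hm_idx)
  finally have E: "(hm n a b c * hm n a' b' c') $$ (i,j) = hm n a b c $$ (i,0) * hm n a' b' c' $$ (0,j) + hm n a b c $$ (i,n-1) * hm n a' b' c' $$ (n-1,j)
     + (\<Sum>r\<in>{1..<n-1}. (if i = r then 1 else if i = 0 then a r else 0) * (if r = j then 1 else if j = n-1 then b' r else 0))" .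
  define S where "S = (\<Sum>r\<in>{1..<n-1}. (if i = r then 1 else if i = 0 then a r else 0) * (if r = j then 1 else if j = n-1 then b' r else 0))"
  have S1: "S = dt n a b'" if "i = 0" "j = n-1"
    unfolding S_def dt_def using that assms by (intro sum.cong) auto
  have S2: "S = (if j = 0 then 0 else a j)" if "i = 0" "j \<noteq> n-1"
  proof -
    have "S = (\<Sum>r\<in>{1..<n-1}. if r = j then a j else 0)"
      unfolding S_def using that by (intro sum.cong) auto
    then show ?thesis using that ij by auto
  qed
  have S3: "S = 0" if "i = n-1"
    unfolding S_def using that assms by (intro sum.neutral) auto
  have S4: "S = (if i = j then 1 else if j = n-1 then b' i else 0)" if "i \<noteq> 0" "i \<noteq> n-1"
  proof -
    have "S = (\<Sum>r\<in>{1..<n-1}. if r = i then (if i = j then 1 else if j = n-1 then b' i else 0) else 0)"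
      unfolding S_def using that by (intro sum.cong) auto
    then show ?thesis using that ij by auto
  qed
  have R: "hm n a b c $$ (i,0) * hm n a' b' c' $$ (0,j) + hm n a b c $$ (i,n-1) * hm n a' b' c' $$ (n-1,j)
     + S = hm n (\<lambda>j. a j + a' j) (\<lambda>i. b i + b' i) (c + c' + dt n a b') $$ (i,j)"
  proof (cases "i = 0")
    case True
    then show ?thesis using ij assms S1 S2 by (cases "j = n-1"; cases "j = 0") (auto simp: hm_idx)
  next
    case False
    then show ?thesis using ij assms S3 S4 by (cases "i = n-1"; cases "j = n-1"; cases "j = 0"; cases "i = j") (auto simp: hm_idx)
  qed
  show "(hm n a b c * hm n a' b' c') $$ (i,j) = hm n (\<lambda>j. a j + a' j) (\<lambda>i. b i + b' i) (c + c' + dt n a b') $$ (i,j)"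
    using E R unfolding S_def by simp
qed (auto simp: hm_def)

lemma dt_smult: "dt n (\<lambda>j. x * a j) b = x * dt n a b"
  by (simp add: dt_def sum_distrib_left mult.assoc)

lemma hm_pow: assumes "n \<ge> 2"
  shows "hm n a b c ^\<^sub>m l = hm n (\<lambda>j. of_nat l * a j) (\<lambda>i. of_nat l * b i)
           (of_nat l * c + of_nat l * (of_nat l - 1) / 2 * dt n a b)"
proof (induction l)
  case 0
  then show ?case by (simp add: hm_one)
next
  case (Suc l)
  have "hm n a b c ^\<^sub>m Suc l = hm n a b c ^\<^sub>m l * hm n a b c" by simp
  also have "\<dots> = hm n (\<lambda>j. of_nat (Suc l) * a j) (\<lambda>i. of_nat (Suc l) * b i)
           (of_nat (Suc l) * c + of_nat (Suc l) * (of_nat (Suc l) - 1) / 2 * dt n a b)"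
    unfolding Suc hm_mult[OF assms] dt_smult
    by (rule arg_cong3[where f = "hm n"]) (auto simp: field_simps)
  finally show ?case .
qed

lemma foldr_carrier: "(\<forall>i\<in>set xs. M i \<in> carrier_mat n n) \<Longrightarrow> B \<in> carrier_mat n n \<Longrightarrow>
   foldr (\<lambda>i acc. M i * acc) xs B \<in> carrier_mat n n"
  by (induction xs) auto

lemma foldr_mult: "(\<forall>i\<in>set xs. M i \<in> carrier_mat n n) \<Longrightarrow> B \<in> carrier_mat n n \<Longrightarrow> C \<in> carrier_mat n n \<Longrightarrow>
   foldr (\<lambda>i acc. M i * acc) xs (B * C) = foldr (\<lambda>i acc. M i * acc) xs B * C"
proof (induction xs)
  case Nil
  then show ?case by simp
next
  case (Cons x xs)
  have "foldr (\<lambda>i acc. M i * acc) xs B \<in> carrier_mat n n"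
    using Cons.prems by (intro foldr_carrier) auto
  then show ?case using Cons by (simp add: assoc_mult_mat[symmetric, of _ n n _ n _ n])
qed

lemma mprod_Suc: assumes "\<forall>i\<in>{1..Suc k}. M i \<in> carrier_mat n n"
  shows "mprod n (Suc k) M = mprod n k M * M (Suc k)"
proof -
  have c: "M (Suc k) \<in> carrier_mat n n" using assms by auto
  have "mprod n (Suc k) M = foldr (\<lambda>i acc. M i * acc) [1..<k+1] (M (Suc k) * 1\<^sub>m n)"
    by (simp add: mprod_def)
  also have "M (Suc k) * 1\<^sub>m n = 1\<^sub>m n * M (Suc k)" using c by simp
  also have "foldr (\<lambda>i acc. M i * acc) [1..<k+1] (1\<^sub>m n * M (Suc k)) = mprod n k M * M (Suc k)"
    unfolding mprod_def using assms c by (intro foldr_mult) auto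
  finally show ?thesis .
qed

lemma mprod_hm: assumes "n \<ge> 2" "\<forall>i\<in>{1..k}. M i = hm n (a i) (b i) (c i)"
  shows "mprod n k M = hm n (\<lambda>t. \<Sum>i=1..k. a i t) (\<lambda>t. \<Sum>i=1..k. b i t)
     ((\<Sum>i=1..k. c i) + (\<Sum>j=1..k. dt n (\<lambda>t. \<Sum>i=1..<j. a i t) (b j)))"
  using assms(2)
proof (induction k)
  case 0
  then show ?case by (simp add: mprod_def hm_one)
next
  case (Suc k)
  have "mprod n (Suc k) M = mprod n k M * M (Suc k)"
    using Suc.prems by (intro mprod_Suc) auto
  also have "\<dots> = hm n (\<lambda>t. \<Sum>i=1..Suc k. a i t) (\<lambda>t. \<Sum>i=1..Suc k. b i t)
     ((\<Sum>i=1..Suc k. c i) + (\<Sum>j=1..Suc k. dt n (\<lambda>t. \<Sum>i=1..<j. a i t) (b j)))"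
    using Suc by (simp add: hm_mult[OF assms(1)] atLeastLessThanSuc_atLeastAtMost algebra_simps)
  finally show ?case .
qed



lemma scalA: fixes x y :: "nat \<Rightarrow> complex"
  shows "(\<Sum>i=1..k. x i * y i) + 2 * (\<Sum>j=1..k. \<Sum>i=1..<j. x i * y j)
    = (\<Sum>i=1..k. x i) * (\<Sum>i=1..k. y i) + (\<Sum>j=1..k. \<Sum>i=1..<j. x i * y j - x j * y i)"
proof (induction k)
  case 0
  then show ?case by simp
next
  case (Suc k)
  have e1: "(\<Sum>i=1..<Suc k. x i * y (Suc k)) = (\<Sum>i=1..k. x i) * y (Suc k)"
    by (simp add: atLeastLessThanSuc_atLeastAtMost sum_distrib_right)
  have e2: "(\<Sum>i=1..<Suc k. x i * y (Suc k) - x (Suc k) * y i) = (\<Sum>i=1..k. x i) * y (Suc k) - x (Suc k) * (\<Sum>i=1..k. y i)"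
    by (simp add: atLeastLessThanSuc_atLeastAtMost sum_distrib_right sum_distrib_left sum_subtractf)
  show ?case using Suc e1 e2 by (simp add: algebra_simps)
qed

lemma scalB: "(\<Sum>j=(1::nat)..k. \<Sum>i=1..<j. f i j) = (\<Sum>i=1..k. \<Sum>j=i+1..k. (f i j :: complex))"
proof (induction k)
  case 0
  then show ?case by simp
next
  case (Suc k)
  have "(\<Sum>i=1..Suc k. \<Sum>j=i+1..Suc k. f i j) = (\<Sum>i=1..k. \<Sum>j=i+1..Suc k. f i j)"
    by simp
  also have "\<dots> = (\<Sum>i=1..k. (\<Sum>j=i+1..k. f i j) + f i (Suc k))"
    by (intro sum.cong) auto
  finally show ?case using Suc by (simp add: sum.distrib atLeastLessThanSuc_atLeastAtMost)
qed

lemma scalC: fixes x y :: "nat \<Rightarrow> complex"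
  assumes "(\<Sum>i=1..k. x i) = 0" "(\<Sum>i=1..k. y i) = 0"
  shows "(\<Sum>j=1..k. \<Sum>i=1..<j. x i * y j - x j * y i) = (\<Sum>j=1..k-1. \<Sum>i=1..<j. x i * y j - x j * y i)"
proof (cases k)
  case 0
  then show ?thesis by simp
next
  case (Suc m)
  have sx: "(\<Sum>i=1..m. x i) = - x (Suc m)" and sy: "(\<Sum>i=1..m. y i) = - y (Suc m)"
    using assms Suc by (simp_all add: eq_neg_iff_add_eq_0)
  have e2: "(\<Sum>i=1..<Suc m. x i * y (Suc m) - x (Suc m) * y i) = (\<Sum>i=1..m. x i) * y (Suc m) - x (Suc m) * (\<Sum>i=1..m. y i)"
    by (simp add: atLeastLessThanSuc_atLeastAtMost sum_distrib_right sum_distrib_left sum_subtractf)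
  show ?thesis using Suc e2 sx sy by simp
qed

lemma scal: fixes x y :: "nat \<Rightarrow> complex"
  assumes "(\<Sum>i=1..k. x i) = 0" "(\<Sum>i=1..k. y i) = 0"
  shows "(\<Sum>i=1..k. x i * y i) + 2 * (\<Sum>j=1..k. \<Sum>i=1..<j. x i * y j)
    = (\<Sum>i=1..k-1. \<Sum>j=i+1..k-1. x i * y j - x j * y i)"
  using scalA[of x y k] scalC[OF assms] scalB[of "\<lambda>i j. x i * y j - x j * y i" "k-1"] assms
  by simp



lemma swap3: "(\<Sum>t\<in>T. \<Sum>i\<in>I. \<Sum>j\<in>J i. f t i j) = (\<Sum>i\<in>I. \<Sum>j\<in>J i. \<Sum>t\<in>T. (f t i j :: complex))"
proof -
  have "(\<Sum>t\<in>T. \<Sum>i\<in>I. \<Sum>j\<in>J i. f t i j) = (\<Sum>i\<in>I. \<Sum>t\<in>T. \<Sum>j\<in>J i. f t i j)"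
    by (rule sum.swap)
  also have "\<dots> = (\<Sum>i\<in>I. \<Sum>j\<in>J i. \<Sum>t\<in>T. f t i j)"
    by (intro sum.cong refl sum.swap)
  finally show ?thesis .
qed

theorem lemma3:
  fixes n k l :: nat and M :: "nat \<Rightarrow> complex mat"
  assumes "n \<ge> 2"
    and "\<forall>i\<in>{1..k}. M i \<in> heis n"
    and "mprod n k M \<in> Omega n"
    and "l \<ge> 1"
  shows "(mprod n k (\<lambda>i. M i ^\<^sub>m l)) $$ (0, n-1) =
           of_nat l * (\<Sum>i=1..k. psi_c n (M i) - 1/2 * dotab n (M i) (M i))
           + (of_nat l)^2 / 2 * (\<Sum>i=1..k-1. \<Sum>j=i+1..k-1. hcomm n (M i) (M j))"
proof -
  define a where "a = (\<lambda>i t. M i $$ (0,t))"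
  define b where "b = (\<lambda>i t. M i $$ (t,n-1))"
  define c where "c = (\<lambda>i. M i $$ (0,n-1))"
  define L :: complex where "L = of_nat l"
  have Mi: "\<forall>i\<in>{1..k}. M i = hm n (a i) (b i) (c i)"
    using heis_hm[OF assms(1)] assms(2) unfolding a_def b_def c_def by blast
  have Mil: "\<forall>i\<in>{1..k}. M i ^\<^sub>m l = hm n (\<lambda>j. L * a i j) (\<lambda>t. L * b i t)
           (L * c i + L * (L - 1) / 2 * dt n (a i) (b i))"
    using Mi hm_pow[OF assms(1)] unfolding L_def by auto
  have P: "mprod n k M = hm n (\<lambda>t. \<Sum>i=1..k. a i t) (\<lambda>t. \<Sum>i=1..k. b i t)
     ((\<Sum>i=1..k. c i) + (\<Sum>j=1..k. dt n (\<lambda>t. \<Sum>i=1..<j. a i t) (b j)))"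
    by (rule mprod_hm[OF assms(1) Mi])
  have Pl: "mprod n k (\<lambda>i. M i ^\<^sub>m l) = hm n (\<lambda>t. \<Sum>i=1..k. L * a i t) (\<lambda>t. \<Sum>i=1..k. L * b i t)
     ((\<Sum>i=1..k. L * c i + L * (L - 1) / 2 * dt n (a i) (b i)) + (\<Sum>j=1..k. dt n (\<lambda>t. \<Sum>i=1..<j. L * a i t) (\<lambda>t. L * b j t)))"
    by (rule mprod_hm[OF assms(1) Mil])
  have n1: "0 < n" "n - 1 < n" "0 \<noteq> n - 1" using assms(1) by auto
  have za: "(\<Sum>i=1..k. a i t) = 0" and zb: "(\<Sum>i=1..k. b i t) = 0" if t: "t \<in> {1..<n-1}" for t
  proof -
    have t': "0 < t" "t < n - 1" using t by auto
    have "mprod n k M $$ (0,t) = 0" "mprod n k M $$ (t,n-1) = 0"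
      using assms(3) t' unfolding Omega_def by auto
    then show "(\<Sum>i=1..k. a i t) = 0" "(\<Sum>i=1..k. b i t) = 0"
      unfolding P using t' n1 by (auto simp: hm_idx)
  qed
  define D where "D = (\<Sum>i=1..k. dt n (a i) (b i))"
  define Q where "Q = (\<Sum>i=1..k-1. \<Sum>j=i+1..k-1. dt n (a i) (b j) - dt n (a j) (b i))"
  define R where "R = (\<Sum>j=1..k. dt n (\<lambda>t. \<Sum>i=1..<j. a i t) (b j))"
  have key: "D + 2 * R = Q"
  proof -
    have "D + 2 * R = (\<Sum>t\<in>{1..<n-1}. (\<Sum>i=1..k. a i t * b i t) + 2 * (\<Sum>j=1..k. \<Sum>i=1..<j. a i t * b j t))"
    proof -
      have D': "D = (\<Sum>t\<in>{1..<n-1}. \<Sum>i=1..k. a i t * b i t)"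
        unfolding D_def dt_def by (rule sum.swap)
      have "R = (\<Sum>j=1..k. \<Sum>t\<in>{1..<n-1}. \<Sum>i=1..<j. a i t * b j t)"
        unfolding R_def dt_def by (simp add: sum_distrib_right)
      also have "\<dots> = (\<Sum>t\<in>{1..<n-1}. \<Sum>j=1..k. \<Sum>i=1..<j. a i t * b j t)"
        by (rule sum.swap)
      finally show ?thesis using D' by (simp add: sum.distrib sum_distrib_left)
    qed
    also have "\<dots> = (\<Sum>t\<in>{1..<n-1}. \<Sum>i=1..k-1. \<Sum>j=i+1..k-1. a i t * b j t - a j t * b i t)"
      using scal za zb by (intro sum.cong) auto
    also have "\<dots> = Q"
      unfolding Q_def dt_def
      by (simp only: sum_subtractf swap3[where f="\<lambda>t i j. a i t * b j t" and T="{1..<n-1}" and I="{1..k-1}" and J="\<lambda>i. {i+1..k-1}"]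
          swap3[where f="\<lambda>t i j. a j t * b i t" and T="{1..<n-1}" and I="{1..k-1}" and J="\<lambda>i. {i+1..k-1}"])
    finally show ?thesis .
  qed
  have "(mprod n k (\<lambda>i. M i ^\<^sub>m l)) $$ (0, n-1) =
     (\<Sum>i=1..k. L * c i + L * (L - 1) / 2 * dt n (a i) (b i)) + (\<Sum>j=1..k. dt n (\<lambda>t. \<Sum>i=1..<j. L * a i t) (\<lambda>t. L * b j t))"
    unfolding Pl using n1 by (simp add: hm_idx)
  also have "(\<Sum>j=1..k. dt n (\<lambda>t. \<Sum>i=1..<j. L * a i t) (\<lambda>t. L * b j t)) = L^2 * R"
    unfolding R_def dt_def
    by (simp add: sum_distrib_left sum_distrib_right power2_eq_square mult_ac)
  also have "(\<Sum>i=1..k. L * c i + L * (L - 1) / 2 * dt n (a i) (b i)) = L * (\<Sum>i=1..k. c i) + L * (L - 1) / 2 * D"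
    unfolding D_def by (simp add: sum.distrib sum_distrib_left)
  finally have lhs: "(mprod n k (\<lambda>i. M i ^\<^sub>m l)) $$ (0, n-1) = L * (\<Sum>i=1..k. c i) + L * (L - 1) / 2 * D + L^2 * R" .
  have e3: "of_nat l * (\<Sum>i=1..k. psi_c n (M i) - 1/2 * dotab n (M i) (M i)) = L * (\<Sum>i=1..k. c i) - L / 2 * D"
    unfolding L_def D_def psi_c_def dotab_def c_def a_def b_def dt_def
    by (simp add: sum_subtractf sum_distrib_left algebra_simps)
  have e4: "(\<Sum>i=1..k-1. \<Sum>j=i+1..k-1. hcomm n (M i) (M j)) = Q"
    unfolding Q_def hcomm_def dotab_def dt_def a_def b_def by simp
  show ?thesis
    apply (subst lhs)
    apply (subst e3)
    apply (subst e4)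
    apply (subst key[symmetric])
    apply (unfold L_def[symmetric])
    apply (simp add: field_simps power2_eq_square)
    done
qed

end
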